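(* Let $\bar R_m(\varepsilon)$ be defined by $\bar R_1(\varepsilon)=\varepsilon$ and, for $m\ge2$, $\big[(-1)^m(1+\varepsilon)^m+(1+\varepsilon)\big]\bar R_m(\varepsilon)=-(3+\varepsilon)\sum_{j=1}^{m-1}\bar R_j(\varepsilon)\bar R_{m-j}(\varepsilon)$. Then each $\bar R_m$ is analytic at $\varepsilon=0$ and, as $\varepsilon\to0$, $$\bar R_{2m+1}(\varepsilon)=\varepsilon^{m+1}\big(a_m+O(\varepsilon)\big)\quad(m\ge0),\qquad \bar R_{2n}(\varepsilon)=\varepsilon^{n+1}\big(c_n+O(\varepsilon)\big)\quad(n\ge1),$$ where $$a_m=\frac{(-9)^m\,\Gamma(m+\tfrac12)}{\sqrt{\pi}\,m!},\qquad c_n=\frac{(-9)^n}{6}.$$ Equivalently, for $|\tau|<1/3$, $$\sum_{m\ge0}a_m\tau^{2m+1}=\frac{\tau}{\sqrt{1+9\tau^2}},\qquad \sum_{n\ge1}c_n\tau^{2n}=-\frac{3}{2}\,\frac{\tau^2}{1+9\tau^2}.$$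
   Context: The $\bar R_m$ are the coefficient functions of the transseries solution of the static logistic map $y(n+1)=(3+\varepsilon)y(n)(1-y(n))$ about its fixed point $(2+\varepsilon)/(3+\varepsilon)$, normalised by $\bar R_1=\varepsilon$. The coefficient $(-1)^m(1+\varepsilon)^m+(1+\varepsilon)$ is nonzero for $\varepsilon>0$, $m\ge 2$. *)

theory Defs
  imports "HOL-Analysis.Analysis" "HOL-Library.Landau_Symbols"
begin

text \<open>Coefficient functions of the transseries of the static logistic map.
  Rbar 0 is an unused dummy value (0). The definition is generic over fields
  so it can be instantiated at real and complex arguments.\<close>

fun Rbar :: "nat \<Rightarrow> 'a::field \<Rightarrow> 'a" where
  "Rbar 0 e = 0"
| "Rbar (Suc 0) e = e"
| "Rbar (Suc (Suc k)) e =
     - (3 + e) * (\<Sum>j\<in>{1..Suc k}. Rbar j e * Rbar (Suc (Suc k) - j) e)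
     / ((-1) ^ Suc (Suc k) * (1 + e) ^ Suc (Suc k) + (1 + e))"

definition a_coef :: "nat \<Rightarrow> real" where
  "a_coef m = (-9) ^ m * Gamma (real m + 1/2) / (sqrt pi * fact m)"

definition c_coef :: "nat \<Rightarrow> real" where
  "c_coef n = (-9) ^ n / 6"

end

theory Submission
  imports Defs "HOL-Computational_Algebra.Formal_Power_Series"
begin

definition ord :: "nat \<Rightarrow> nat" where "ord m = m div 2 + 1"
definition dl :: "nat \<Rightarrow> nat" where "dl m = (if even m then 0 else 1)"

definition E :: "nat \<Rightarrow> 'a::field \<Rightarrow> 'a" where
  "E m z = - (1 + z) * (\<Sum>i\<in>{1..m-1}. of_nat ((m-1) choose i) * z^(i-1))"

definition Den :: "nat \<Rightarrow> 'a::field \<Rightarrow> 'a" where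
  "Den m z = (if even m then (-1) ^ m * (1 + z) ^ m + (1 + z) else E m z)"

fun G :: "nat \<Rightarrow> 'a::field \<Rightarrow> 'a" where
  "G 0 z = 0"
| "G (Suc 0) z = 1"
| "G (Suc (Suc k)) z =
     - (3 + z) * (\<Sum>j\<in>{1..Suc k}. z ^ (ord j + ord (Suc (Suc k) - j) - ord (Suc (Suc k)) - dl (Suc (Suc k)))
         * G j z * G (Suc (Suc k) - j) z)
     / Den (Suc (Suc k)) z"

lemma ord_ge: "1 \<le> j \<Longrightarrow> j < m \<Longrightarrow> ord m + dl m \<le> ord j + ord (m - j)"
  unfolding ord_def dl_def by presburger

lemma D_eq: "(-1) ^ m * (1 + z) ^ m + (1 + z) = z ^ dl m * Den m (z::'a::field)"
proof (cases "even m")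
  case True then show ?thesis by (simp add: dl_def Den_def)
next
  case False
  then obtain k where m: "m = Suc k" by (cases m) auto
  have "(1 + z) ^ k = (\<Sum>i\<le>k. of_nat (k choose i) * z ^ i)"
    using binomial_ring[of z 1 k] by (simp add: add.commute)
  also have "\<dots> = 1 + (\<Sum>i\<in>{1..k}. of_nat (k choose i) * z ^ i)"
    by (simp add: atMost_atLeast0 sum.atLeast_Suc_atMost)
  also have "(\<Sum>i\<in>{1..k}. of_nat (k choose i) * z ^ i) = z * (\<Sum>i\<in>{1..k}. of_nat (k choose i) * z ^ (i-1))"
    by (simp add: sum_distrib_left) (intro sum.cong refl, auto simp: power_eq_if)
  finally have pk0: "(1+z)^k = 1 + z * (\<Sum>i\<in>{1..k}. of_nat (k choose i) * z ^ (i-1))" .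
  define S where "S = (\<Sum>i\<in>{1..k}. of_nat (k choose i) * z ^ (i-1))"
  have pk: "(1+z)^k = 1 + z * S" using pk0 by (simp add: S_def)
  have "(-1::'a)^m = -1" using False by simp
  hence "(-1) ^ m * (1 + z) ^ m + (1 + z) = - ((1+z) * (1 + z*S)) + (1+z)"
    by (simp add: m pk)
  also have "\<dots> = z * (- (1+z) * S)" by (simp add: algebra_simps)
  also have "- (1+z) * S = Den m z" using False by (simp add: Den_def E_def S_def m)
  finally show ?thesis using False by (simp add: dl_def)
qed

lemma R_G:
  fixes z :: "'a::field"
  assumes z: "z \<noteq> 0"
  shows "(\<forall>k\<in>{2..m}. Den k z \<noteq> 0) \<Longrightarrow> Rbar m z = z ^ ord m * G m z"
proof (induction m rule: less_induct)
  case (less m)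
  show ?case
  proof (cases m)
    case 0 then show ?thesis by simp
  next
    case (Suc k0)
    show ?thesis
    proof (cases k0)
      case 0 then show ?thesis using Suc by (simp add: ord_def)
    next
      case (Suc k)
      hence m: "m = Suc (Suc k)" using \<open>m = Suc k0\<close> by simp
      define e where "e j = ord j + ord (m - j) - ord m - dl m" for j
      have IH: "Rbar j z = z ^ ord j * G j z" if "1 \<le> j" "j < m" for j
        using less.IH[OF that(2)] less.prems that by auto
      have "(\<Sum>j\<in>{1..Suc k}. Rbar j z * Rbar (m - j) z)
          = (\<Sum>j\<in>{1..Suc k}. z ^ (ord m + dl m) * (z ^ e j * G j z * G (m - j) z))"
      proof (intro sum.cong refl)
        fix j assume j: "j \<in> {1..Suc k}"
        have ex: "ord j + ord (m - j) = (ord m + dl m) + e j"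
          using ord_ge[of j m] j m by (auto simp: e_def)
        have "Rbar j z * Rbar (m - j) z = z ^ (ord j + ord (m - j)) * (G j z * G (m - j) z)"
        proof -
          have "Rbar j z = z ^ ord j * G j z" using IH[of j] j m by auto
          moreover have "Rbar (m - j) z = z ^ ord (m - j) * G (m - j) z" using IH[of "m - j"] j m by auto
          ultimately show ?thesis by (simp add: power_add mult_ac)
        qed
        also have "\<dots> = z ^ (ord m + dl m) * (z ^ e j * G j z * G (m - j) z)"
          by (simp only: ex power_add mult_ac)
        finally show "Rbar j z * Rbar (m - j) z = z ^ (ord m + dl m) * (z ^ e j * G j z * G (m - j) z)" .
      qed
      also have "\<dots> = z ^ (ord m + dl m) * (\<Sum>j\<in>{1..Suc k}. z ^ e j * G j z * G (m - j) z)"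
        by (rule sum_distrib_left[symmetric])
      finally have S: "(\<Sum>j\<in>{1..Suc k}. Rbar j z * Rbar (m - j) z) = z ^ (ord m + dl m) * (\<Sum>j\<in>{1..Suc k}. z ^ e j * G j z * G (m - j) z)" .
      have Dn: "Den m z \<noteq> 0" using less.prems m by auto
      have "Rbar m z = - (3 + z) * (z ^ (ord m + dl m) * (\<Sum>j\<in>{1..Suc k}. z ^ e j * G j z * G (m - j) z)) / (z ^ dl m * Den m z)"
        using S D_eq[of m z] by (simp add: m del: Rbar.simps(3)) (simp add: m)
      also have "\<dots> = z ^ ord m * (- (3 + z) * (\<Sum>j\<in>{1..Suc k}. z ^ e j * G j z * G (m - j) z) / Den m z)"
        using z Dn by (simp add: power_add field_simps)
      also have "\<dots> = z ^ ord m * G m z" by (simp add: m e_def)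
      finally show ?thesis .
    qed
  qed
qed

lemma E0: "E k (0::'a::field) = - of_nat (k - 1)"
proof (cases "k \<ge> 2")
  case True
  have "(\<Sum>i\<in>{1..k-1}. of_nat ((k-1) choose i) * (0::'a)^(i-1))
       = of_nat ((k-1) choose 1) * 0^0 + (\<Sum>i\<in>{2..k-1}. of_nat ((k-1) choose i) * (0::'a)^(i-1))"
    using True by (subst sum.atLeast_Suc_atMost) (auto simp: numeral_2_eq_2)
  also have "(\<Sum>i\<in>{2..k-1}. of_nat ((k-1) choose i) * (0::'a)^(i-1)) = 0"
    by (intro sum.neutral) auto
  finally show ?thesis by (simp add: E_def)
next
  case False
  then have "k - 1 = 0" by auto
  then show ?thesis by (simp add: E_def)
qed

lemma Den0: "k \<ge> 2 \<Longrightarrow> Den k (0::'a::{field_char_0}) \<noteq> 0"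
  by (auto simp: Den_def E0)

lemma Den_cont: "isCont (Den k) (0::'a::real_normed_field)"
proof -
  have "Den k = (\<lambda>z::'a. if even k then (-1) ^ k * (1 + z) ^ k + (1 + z)
      else - (1 + z) * (\<Sum>i\<in>{1..k-1}. of_nat ((k-1) choose i) * z^(i-1)))"
    by (auto simp: Den_def E_def fun_eq_iff)
  then show ?thesis by (cases "even k") (auto intro!: continuous_intros)
qed

lemma ev_Den: "eventually (\<lambda>z. \<forall>k\<in>{2..m}. Den k z \<noteq> (0::'a::{real_normed_field,field_char_0})) (nhds 0)"
proof (rule eventually_ball_finite)
  show "\<forall>k\<in>{2..m}. \<forall>\<^sub>F z in nhds 0. Den k z \<noteq> (0::'a)"
  proof
    fix k :: nat assume "k \<in> {2..m}"
    then have "Den k (0::'a) \<noteq> 0" by (intro Den0) auto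
    moreover have "(Den k \<longlongrightarrow> Den k 0) (nhds (0::'a))"
      using Den_cont[of k] by (simp add: isCont_def tendsto_nhds_iff)
    ultimately show "\<forall>\<^sub>F z in nhds 0. Den k z \<noteq> (0::'a)"
      using tendsto_imp_eventually_ne by blast
  qed
qed simp

lemma G_analytic: "G m analytic_on {0::complex}"
proof (induction m rule: less_induct)
  case (less m)
  show ?case
  proof (cases m)
    case 0 then show ?thesis by simp
  next
    case (Suc k0)
    show ?thesis
    proof (cases k0)
      case 0 then show ?thesis using Suc by simp
    next
      case (Suc k)
      hence m: "m = Suc (Suc k)" using \<open>m = Suc k0\<close> by simp
      have Da: "Den m analytic_on {0::complex}"
      proof -
        have "Den m = (\<lambda>z::complex. if even m then (-1) ^ m * (1 + z) ^ m + (1 + z)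
            else - (1 + z) * (\<Sum>i\<in>{1..m-1}. of_nat ((m-1) choose i) * z^(i-1)))"
          by (auto simp: Den_def E_def fun_eq_iff)
        then show ?thesis by (cases "even m") (auto intro!: analytic_intros)
      qed
      have "G m = (\<lambda>z::complex. - (3 + z) * (\<Sum>j\<in>{1..Suc k}. z ^ (ord j + ord (m - j) - ord m - dl m)
         * G j z * G (m - j) z) / Den m z)" by (simp add: m fun_eq_iff)
      note eq = this
      show ?thesis unfolding eq
        using Da Den0[of m] m by (auto intro!: analytic_intros less.IH)
    qed
  qed
qed

lemma G_diff: "G m field_differentiable (at (0::'a::{real_normed_field,field_char_0}))"
proof (induction m rule: less_induct)
  case (less m)
  show ?case
  proof (cases m)
    case 0 then show ?thesis by simp
  next
    case (Suc k0)
    show ?thesis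
    proof (cases k0)
      case 0 then show ?thesis using Suc by simp
    next
      case (Suc k)
      hence m: "m = Suc (Suc k)" using \<open>m = Suc k0\<close> by simp
      have Da: "Den m field_differentiable (at (0::'a))"
      proof -
        have "Den m = (\<lambda>z::'a. if even m then (-1) ^ m * (1 + z) ^ m + (1 + z)
            else - (1 + z) * (\<Sum>i\<in>{1..m-1}. of_nat ((m-1) choose i) * z^(i-1)))"
          by (auto simp: Den_def E_def fun_eq_iff)
        then show ?thesis by (cases "even m") (auto intro!: derivative_intros)
      qed
      have "G m = (\<lambda>z::'a. - (3 + z) * (\<Sum>j\<in>{1..Suc k}. z ^ (ord j + ord (m - j) - ord m - dl m)
         * G j z * G (m - j) z) / Den m z)" by (simp add: m fun_eq_iff)
      note eq = this
      show ?thesis unfolding eq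
        using Da Den0[of m] m by (auto intro!: derivative_intros less.IH)
    qed
  qed
qed



definition gq :: "nat \<Rightarrow> real" where "gq n = ((-1/2::real) gchoose n)"

lemma gq_Suc: "gq (Suc n) = gq n * (-1/2 - real n) / (real n + 1)"
proof -
  have "of_nat (Suc n) * ((-1/2::real) gchoose Suc n) = (-1/2) * ((-1/2 - 1) gchoose n)"
    by (rule gbinomial_absorption)
  have h: "(-1/2::real) * ((-1/2::real) gchoose n) = of_nat n * ((-1/2) gchoose n) + of_nat (Suc n) * ((-1/2) gchoose (Suc n))"
    by (rule gbinomial_mult_1)
  show ?thesis unfolding gq_def using h by (simp add: field_simps)
qed

lemma a_coef_gq: "a_coef n = 9 ^ n * gq n"
proof (induction n)
  case 0 then show ?case by (simp add: a_coef_def gq_def Gamma_one_half_real)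
next
  case (Suc n)
  have g: "Gamma (real (Suc n) + 1/2) = (real n + 1/2) * Gamma (real n + 1/2)"
  proof -
    have "real n + 1/2 \<notin> \<int>\<^sub>\<le>\<^sub>0" by (auto dest: nonpos_Ints_nonpos)
    then show ?thesis using Gamma_plus1[of "real n + 1/2"] by (simp add: add_ac)
  qed
  have "a_coef (Suc n) = (-9)^Suc n * ((real n + 1/2) * Gamma (real n + 1/2)) / (sqrt pi * ((real n + 1) * fact n))"
    unfolding a_coef_def g by (simp add: fact_Suc algebra_simps)
  also have "\<dots> = a_coef n * (-9) * (real n + 1/2) / (real n + 1)"
    unfolding a_coef_def by (simp add: power_Suc mult_ac)
  also have "\<dots> = 9 ^ Suc n * gq (Suc n)"
    by (simp add: Suc gq_Suc field_simps)
  finally show ?case .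
qed

lemma gq_conv: "(\<Sum>p\<le>n. gq p * gq (n - p)) = (-1) ^ n"
proof -
  have "(\<Sum>p\<le>n. gq p * gq (n - p)) = ((-1/2 + -1/2::real) gchoose n)"
    using gbinomial_Vandermonde[of "-1/2::real" "-1/2" n] by (simp add: gq_def atMost_atLeast0)
  also have "\<dots> = (-1) ^ n" using gbinomial_minus[of "1::real" n] by (simp add: binomial_gbinomial[symmetric])
  finally show ?thesis .
qed

definition bq :: "nat \<Rightarrow> real" where "bq n = (-1) ^ n * gq n"

lemma bq_sum: "(\<Sum>q<N. bq q) = 2 * real N * bq N"
proof (induction N)
  case 0 then show ?case by simp
next
  case (Suc N)
  have "bq (Suc N) = bq N * (real N + 1/2) / (real N + 1)"
    by (simp add: bq_def gq_Suc field_simps)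
  then show ?case using Suc by (simp add: field_simps)
qed

lemma a_bq: "a_coef n = (-9) ^ n * bq n"
  by (simp add: a_coef_gq bq_def power_mult_distrib[symmetric])

lemma a_conv: "(\<Sum>p\<le>n. a_coef p * a_coef (n - p)) = (-9) ^ n"
proof -
  have "(\<Sum>p\<le>n. a_coef p * a_coef (n - p)) = (\<Sum>p\<le>n. 9 ^ n * (gq p * gq (n - p)))"
    by (intro sum.cong refl) (auto simp: a_coef_gq power_add[symmetric])
  also have "\<dots> = 9 ^ n * (-1) ^ n" by (simp add: sum_distrib_left[symmetric] gq_conv)
  finally show ?thesis by (simp add: power_mult_distrib[symmetric])
qed



definition cc :: "nat \<Rightarrow> real" where "cc p = (if p = 0 then 0 else c_coef p)"
definition LL :: "nat \<Rightarrow> real" where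
  "LL m = (if m = 0 then 0 else if odd m then a_coef (m div 2) else c_coef (m div 2))"

lemma LL_odd[simp]: "LL (2*p+1) = a_coef p" by (simp add: LL_def)
lemma LL_odd'[simp]: "LL (Suc (2*p)) = a_coef p" by (simp add: LL_def)
lemma LL_even[simp]: "LL (2*p) = cc p" by (simp add: LL_def cc_def)

lemma sum_ends: "f 0 = 0 \<Longrightarrow> (\<Sum>j\<in>{1..Suc k}. f j) = (\<Sum>j<Suc (Suc k). f j)"
proof -
  assume "f 0 = 0"
  have "(\<Sum>j<Suc (Suc k). f j) = (\<Sum>j<Suc k. f (Suc j)) + f 0" by (simp only: sum.lessThan_Suc_shift add.commute)
  also have "(\<Sum>j<Suc k. f (Suc j)) = (\<Sum>j\<in>{1..Suc k}. f j)"
    by (induction k) (simp_all add: sum.cl_ivl_Suc)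
  finally show ?thesis using \<open>f 0 = 0\<close> by simp
qed

lemma sum_split: fixes f :: "nat \<Rightarrow> 'a::comm_monoid_add" shows "(\<Sum>j<2*n. f j) = (\<Sum>p<n. f (2*p)) + (\<Sum>p<n. f (2*p+1))"
  by (induction n) (simp_all add: algebra_simps)

lemma G0: "G m (0::real) = LL m"
proof (induction m rule: less_induct)
  case (less m)
  show ?case
  proof (cases m)
    case 0 then show ?thesis by (simp add: LL_def)
  next
    case (Suc k0)
    show ?thesis
    proof (cases k0)
      case 0 then show ?thesis using Suc by (simp add: LL_def a_coef_def Gamma_one_half_real)
    next
      case (Suc k)
      hence m: "m = Suc (Suc k)" using \<open>m = Suc k0\<close> by simp
      define f where "f j = (0::real) ^ (ord j + ord (m - j) - ord m - dl m) * LL j * LL (m - j)" for j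
      have f0: "f 0 = 0" by (simp add: f_def LL_def)
      have fm: "f m = 0" by (simp add: f_def LL_def)
      have "G m (0::real) = - 3 * (\<Sum>j\<in>{1..Suc k}. (0::real) ^ (ord j + ord (m - j) - ord m - dl m)
         * G j 0 * G (m - j) 0) / Den m 0" by (simp add: m)
      also have "(\<Sum>j\<in>{1..Suc k}. (0::real) ^ (ord j + ord (m - j) - ord m - dl m) * G j 0 * G (m - j) 0)
          = (\<Sum>j\<in>{1..Suc k}. f j)"
        by (intro sum.cong refl) (auto simp: f_def m less.IH)
      also have "\<dots> = (\<Sum>j<m. f j)" using sum_ends[of f k] f0 m by simp
      finally have Gm: "G m 0 = - 3 * (\<Sum>j<m. f j) / Den m 0" .
      show ?thesis
      proof (cases "even m")
        case True
        then obtain n where n: "m = 2 * (n + 1)" using m by (metis evenE Suc_eq_plus1 nat.exhaust mult_0_right nat.distinct(1)) 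
        have "(\<Sum>j<m. f j) = (\<Sum>p<n+1. f (2*p)) + (\<Sum>p<n+1. f (2*p+1))"
          unfolding n by (rule sum_split)
        also have "(\<Sum>p<n+1. f (2*p)) = 0"
        proof (intro sum.neutral ballI)
          fix p assume "p \<in> {..<n+1}"
          then have e: "ord (2*p) + ord (m - 2*p) - ord m - dl m = 1"
            by (auto simp: n ord_def dl_def)
          show "f (2*p) = 0" unfolding f_def e by simp
        qed
        also have "(\<Sum>p<n+1. f (2*p+1)) = (\<Sum>p\<le>n. a_coef p * a_coef (n - p))"
        proof -
          have "(\<Sum>p<n+1. f (2*p+1)) = (\<Sum>p<n+1. a_coef p * a_coef (n - p))"
          proof (intro sum.cong refl)
            fix p assume "p \<in> {..<n+1}"
            then have p: "p \<le> n" by auto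
            have e: "ord (2*p+1) + ord (m - (2*p+1)) - ord m - dl m = 0"
              using p by (auto simp: n ord_def dl_def)
            have mm: "m - (2*p+1) = 2 * (n - p) + 1" using p n by simp
            show "f (2*p+1) = a_coef p * a_coef (n - p)"
              unfolding f_def e unfolding mm by simp
          qed
          then show ?thesis by (simp add: lessThan_Suc_atMost)
        qed
        finally have S: "(\<Sum>j<m. f j) = (-9) ^ n" by (simp add: a_conv)
        have D: "Den m (0::real) = 2" using True by (simp add: Den_def)
        show ?thesis using Gm S D n by (simp add: LL_def c_coef_def)
      next
        case False
        then obtain n where n: "m = 2 * (n + 1) + 1" using m
          by (metis oddE Suc_eq_plus1 Suc_inject mult_0_right nat.exhaust nat.distinct(1) add_0)
        have "(\<Sum>j<m. f j) = (\<Sum>j<Suc m. f j)" using fm by simp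
        also have "\<dots> = (\<Sum>p<n+2. f (2*p)) + (\<Sum>p<n+2. f (2*p+1))"
          using sum_split[of f "n+2"] n by (simp add: algebra_simps)
        also have "(\<Sum>p<n+2. f (2*p)) = (\<Sum>p<n+2. cc p * a_coef (n + 1 - p))"
        proof (intro sum.cong refl)
          fix p assume "p \<in> {..<n+2}"
          then have p: "p \<le> n + 1" by auto
          have e: "ord (2*p) + ord (m - 2*p) - ord m - dl m = 0"
            using p by (auto simp: n ord_def dl_def)
          have mm: "m - 2*p = 2 * (n + 1 - p) + 1" using p n by simp
          show "f (2*p) = cc p * a_coef (n + 1 - p)"
            unfolding f_def e unfolding mm by simp
        qed
        also have "(\<Sum>p<n+2. f (2*p+1)) = (\<Sum>p<n+2. a_coef p * cc (n + 1 - p))"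
        proof (intro sum.cong refl)
          fix p assume "p \<in> {..<n+2}"
          then have p: "p \<le> n + 1" by auto
          have e: "ord (2*p+1) + ord (m - (2*p+1)) - ord m - dl m = 0"
            using p by (auto simp: n ord_def dl_def)
          have mm: "m - (2*p+1) = 2 * (n + 1 - p)" using p n by simp
          show "f (2*p+1) = a_coef p * cc (n + 1 - p)"
            unfolding f_def e unfolding mm by simp
        qed
        also have "(\<Sum>p<n+2. a_coef p * cc (n + 1 - p)) = (\<Sum>p<n+2. cc p * a_coef (n + 1 - p))"
        proof -
          have "(\<Sum>p<n+2. a_coef p * cc (n + 1 - p)) = (\<Sum>i<n+2. a_coef (n + 2 - Suc i) * cc (n + 1 - (n + 2 - Suc i)))"
            by (rule sum.nat_diff_reindex[symmetric])
          also have "\<dots> = (\<Sum>p<n+2. cc p * a_coef (n + 1 - p))"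
            by (intro sum.cong refl) (auto simp: mult.commute)
          finally show ?thesis .
        qed
        finally have S1: "(\<Sum>j<m. f j) = 2 * (\<Sum>p<n+2. cc p * a_coef (n + 1 - p))" by simp
        have "(\<Sum>p<n+2. cc p * a_coef (n + 1 - p)) = (\<Sum>p<n+1. cc (Suc p) * a_coef (n - p))"
          using sum.lessThan_Suc_shift[of "\<lambda>p. cc p * a_coef (n + 1 - p)" "n+1"] by (simp add: cc_def)
        also have "\<dots> = (\<Sum>p<n+1. (-9) ^ (n+1) / 6 * bq (n - p))"
        proof (intro sum.cong refl)
          fix p assume "p \<in> {..<n+1}"
          then have p: "p \<le> n" by auto
          have "(-9::real) ^ Suc p * (-9) ^ (n - p) = (-9) ^ (n+1)"
            using p by (simp add: power_add[symmetric])
          then show "cc (Suc p) * a_coef (n - p) = (-9) ^ (n+1) / 6 * bq (n - p)"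
            by (simp add: cc_def c_coef_def a_bq)
        qed
        also have "\<dots> = (-9) ^ (n+1) / 6 * (\<Sum>p<n+1. bq (n + 1 - Suc p))"
          unfolding sum_distrib_left by (intro sum.cong refl) simp
        also have "(\<Sum>p<n+1. bq (n + 1 - Suc p)) = (\<Sum>p<n+1. bq p)" by (rule sum.nat_diff_reindex)
        also have "\<dots> = 2 * real (n+1) * bq (n+1)" by (rule bq_sum)
        finally have S2: "(\<Sum>p<n+2. cc p * a_coef (n + 1 - p)) = (real n + 1) / 3 * a_coef (n+1)"
          by (simp add: a_bq)
        have D: "Den m (0::real) = - (2 * real n + 2)" using False n by (simp add: Den_def E0)
        have "G m 0 = -3 * (2 * ((real n + 1) / 3 * a_coef (n+1))) / (- (2 * real n + 2))"
          unfolding Gm S1 S2 D ..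
        also have "\<dots> = a_coef (n+1)" by (simp add: field_simps)
        also have "a_coef (n+1) = LL m" unfolding n by (rule LL_odd[symmetric])
        finally show ?thesis .
      qed
    qed
  qed
qed



lemma LL_odd2[simp]: "LL (Suc (p*2)) = a_coef p" by (simp add: LL_def)
lemma LL_even2[simp]: "LL (p*2) = cc p" by (simp add: LL_def cc_def)

lemma bigo_aux:
  fixes g F :: "real \<Rightarrow> real"
  assumes g: "g field_differentiable (at 0)"
    and ev: "eventually (\<lambda>e. F e = e ^ k * (g e - g 0)) (at 0)"
  shows "F \<in> O[at 0](\<lambda>e. e ^ (k+1))"
proof -
  obtain D where "(g has_field_derivative D) (at 0)" using g unfolding field_differentiable_def by blast
  then have "((\<lambda>y. (g y - g 0) / (y - 0)) \<longlongrightarrow> D) (at 0)"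
    using has_field_derivative_iff by blast
  then have "eventually (\<lambda>y. dist ((g y - g 0) / (y - 0)) D < 1) (at 0)"
    by (rule tendstoD) simp
  moreover have "eventually (\<lambda>y. y \<noteq> (0::real)) (at 0)" by (simp add: eventually_at_filter)
  ultimately have "eventually (\<lambda>e. norm (F e) \<le> (\<bar>D\<bar> + 1) * norm (e ^ (k+1))) (at 0)"
    using ev
  proof eventually_elim
    case (elim y)
    have "\<bar>(g y - g 0) / y\<bar> \<le> \<bar>D\<bar> + 1" using elim(1) by (simp add: dist_real_def)
    then have "\<bar>g y - g 0\<bar> \<le> (\<bar>D\<bar> + 1) * \<bar>y\<bar>" using elim(2) by (simp add: abs_divide field_simps)
    then have "\<bar>y\<bar> ^ k * \<bar>g y - g 0\<bar> \<le> \<bar>y\<bar> ^ k * ((\<bar>D\<bar> + 1) * \<bar>y\<bar>)"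
      by (intro mult_left_mono) auto
    then show ?case using elim(3) by (simp add: abs_mult power_abs mult_ac)
  qed
  then show ?thesis by (intro bigoI)
qed

lemma R_G_ev: "eventually (\<lambda>z. Rbar m z = z ^ ord m * G m z) (at (0::'a::{real_normed_field,field_char_0}))"
proof -
  have "eventually (\<lambda>z. \<forall>k\<in>{2..m}. Den k z \<noteq> (0::'a)) (at 0)"
    using ev_Den[of m] unfolding eventually_at_filter by (auto elim: eventually_mono)
  moreover have "eventually (\<lambda>z. z \<noteq> (0::'a)) (at 0)" by (simp add: eventually_at_filter)
  ultimately show ?thesis by eventually_elim (rule R_G)
qed

theorem mainTheorem2:
  shows "(\<forall>m\<ge>1. \<exists>f. f analytic_on {0} \<and>
            (\<forall>\<^sub>F z in at (0::complex). f z = Rbar m z))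
   \<and> (\<forall>m. (\<lambda>e::real. Rbar (2*m+1) e - e ^ (m+1) * a_coef m) \<in> O[at 0](\<lambda>e. e ^ (m+2)))
   \<and> (\<forall>n\<ge>1. (\<lambda>e::real. Rbar (2*n) e - e ^ (n+1) * c_coef n) \<in> O[at 0](\<lambda>e. e ^ (n+2)))
   \<and> (\<forall>\<tau>::real. \<bar>\<tau>\<bar> < 1/3 \<longrightarrow>
        (\<lambda>m. a_coef m * \<tau> ^ (2*m+1)) sums (\<tau> / sqrt (1 + 9 * \<tau>^2)))
   \<and> (\<forall>\<tau>::real. \<bar>\<tau>\<bar> < 1/3 \<longrightarrow>
        (\<lambda>n. c_coef (n+1) * \<tau> ^ (2*(n+1))) sums (- 3/2 * \<tau>^2 / (1 + 9 * \<tau>^2)))"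
proof (intro conjI allI impI)
  fix m :: nat assume "m \<ge> 1"
  show "\<exists>f. f analytic_on {0} \<and> (\<forall>\<^sub>F z in at (0::complex). f z = Rbar m z)"
  proof (intro exI conjI)
    show "(\<lambda>z::complex. z ^ ord m * G m z) analytic_on {0}"
      by (intro analytic_intros G_analytic)
    show "\<forall>\<^sub>F z in at (0::complex). z ^ ord m * G m z = Rbar m z"
      using R_G_ev[of m] by (simp add: eq_commute)
  qed
next
  fix m :: nat
  have "(\<lambda>e::real. Rbar (2*m+1) e - e ^ (m+1) * a_coef m) \<in> O[at 0](\<lambda>e. e ^ (m+1+1))"
  proof (rule bigo_aux[OF G_diff[of "2*m+1"]])
    show "\<forall>\<^sub>F e in at 0. Rbar (2*m+1) e - e ^ (m+1) * a_coef m = e ^ (m+1) * (G (2*m+1) e - G (2*m+1) (0::real))"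
      using R_G_ev[of "2*m+1"] by eventually_elim (simp add: G0 ord_def algebra_simps)
  qed
  then show "(\<lambda>e::real. Rbar (2*m+1) e - e ^ (m+1) * a_coef m) \<in> O[at 0](\<lambda>e. e ^ (m+2))"
    by (simp add: numeral_2_eq_2)
next
  fix n :: nat assume n: "n \<ge> 1"
  have "(\<lambda>e::real. Rbar (2*n) e - e ^ (n+1) * c_coef n) \<in> O[at 0](\<lambda>e. e ^ (n+1+1))"
  proof (rule bigo_aux[OF G_diff[of "2*n"]])
    have Gc: "G (n*2) (0::real) = c_coef n" using n by (simp add: G0 cc_def)
    show "\<forall>\<^sub>F e in at 0. Rbar (2*n) e - e ^ (n+1) * c_coef n = e ^ (n+1) * (G (2*n) e - G (2*n) (0::real))"
      using R_G_ev[of "2*n"] by eventually_elim (simp add: Gc ord_def algebra_simps)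
  qed
  then show "(\<lambda>e::real. Rbar (2*n) e - e ^ (n+1) * c_coef n) \<in> O[at 0](\<lambda>e. e ^ (n+2))"
    by (simp add: numeral_2_eq_2)
next
  fix \<tau> :: real assume t: "\<bar>\<tau>\<bar> < 1/3"
  have t2: "\<tau>^2 < 1/9"
  proof -
    have "\<tau>^2 = \<bar>\<tau>\<bar>^2" by simp
    also have "\<dots> < (1/3)^2" using t by (intro power_strict_mono) auto
    also have "(1/3::real)^2 = 1/9" by (simp add: power2_eq_square)
    finally show ?thesis .
  qed
  have h0: "0 \<le> 9 * \<tau>^2" by simp
  have "\<bar>9 * \<tau>^2\<bar> = 9 * \<tau>^2" using h0 by (rule abs_of_nonneg)
  then have "\<bar>9 * \<tau>^2\<bar> < 1" using t2 by linarith
  from gen_binomial_real[OF this, of "-1/2"]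
  have "(\<lambda>n. \<tau> * (((-1/2) gchoose n) * (9 * \<tau>^2)^n)) sums (\<tau> * (1 + 9 * \<tau>^2) powr (-1/2))"
    by (rule sums_mult)
  moreover have "(\<lambda>n. \<tau> * (((-1/2) gchoose n) * (9 * \<tau>^2)^n)) = (\<lambda>m. a_coef m * \<tau> ^ (2*m+1))"
  proof
    fix n
    have p1: "(9 * \<tau>^2)^n = 9^n * (\<tau>^2)^n" by (rule power_mult_distrib)
    have p2: "\<tau> ^ (2*n+1) = \<tau> * (\<tau>^2)^n" by (simp only: power_mult power_Suc Suc_eq_plus1[symmetric])
    show "\<tau> * (((-1/2) gchoose n) * (9 * \<tau>^2)^n) = a_coef n * \<tau> ^ (2*n+1)"
      unfolding p1 p2 a_coef_gq gq_def by (simp only: mult_ac)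
  qed
  moreover have "\<tau> * (1 + 9 * \<tau>^2) powr (-1/2) = \<tau> / sqrt (1 + 9 * \<tau>^2)"
  proof -
    have pos: "1 + 9 * \<tau>^2 > 0" by (simp add: add_pos_nonneg)
    have "(1 + 9 * \<tau>^2) powr (-1/2) = (1 + 9 * \<tau>^2) powr (- (1/2))" by (simp only: minus_divide_left)
    also have "\<dots> = inverse ((1 + 9 * \<tau>^2) powr (1/2))" by (rule powr_minus)
    also have "\<dots> = inverse (sqrt (1 + 9 * \<tau>^2))"
      by (simp only: powr_half_sqrt[OF less_imp_le[OF pos]])
    finally have eq: "(1 + 9 * \<tau>^2) powr (-1/2) = inverse (sqrt (1 + 9 * \<tau>^2))" .
    show ?thesis unfolding eq by (simp only: divide_inverse)
  qed
  ultimately show "(\<lambda>m. a_coef m * \<tau> ^ (2*m+1)) sums (\<tau> / sqrt (1 + 9 * \<tau>^2))" by (simp only:)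
next
  fix \<tau> :: real assume t: "\<bar>\<tau>\<bar> < 1/3"
  have t2: "\<tau>^2 < 1/9"
  proof -
    have "\<tau>^2 = \<bar>\<tau>\<bar>^2" by simp
    also have "\<dots> < (1/3)^2" using t by (intro power_strict_mono) auto
    also have "(1/3::real)^2 = 1/9" by (simp add: power2_eq_square)
    finally show ?thesis .
  qed
  have h0: "-9 * \<tau>^2 \<le> 0" by simp
  have "norm (-9 * \<tau>^2) = - (-9 * \<tau>^2)" unfolding real_norm_def using h0 by (rule abs_of_nonpos)
  then have "norm (-9 * \<tau>^2) < 1" using t2 by linarith
  from geometric_sums[OF this]
  have "(\<lambda>n. (-3/2 * \<tau>^2) * (-9 * \<tau>^2)^n) sums ((-3/2 * \<tau>^2) * (1 / (1 - (-9 * \<tau>^2))))"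
    by (rule sums_mult)
  moreover have "(\<lambda>n. (-3/2 * \<tau>^2) * (-9 * \<tau>^2)^n) = (\<lambda>n. c_coef (n+1) * \<tau> ^ (2*(n+1)))"
  proof
    fix n
    have p1: "(-9 * \<tau>^2)^n = (-9)^n * (\<tau>^2)^n" by (rule power_mult_distrib)
    have p2: "\<tau> ^ (2*(n+1)) = \<tau>^2 * (\<tau>^2)^n" by (simp only: power_mult power_Suc Suc_eq_plus1[symmetric])
    have p3: "c_coef (n+1) = -3/2 * (-9)^n" by (simp add: c_coef_def)
    show "(-3/2 * \<tau>^2) * (-9 * \<tau>^2)^n = c_coef (n+1) * \<tau> ^ (2*(n+1))"
      unfolding p1 p2 p3 by (simp only: mult_ac)
  qed
  moreover have "(-3/2 * \<tau>^2) * (1 / (1 - (-9 * \<tau>^2))) = - 3/2 * \<tau>^2 / (1 + 9 * \<tau>^2)"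
    by (simp only: diff_minus_eq_add times_divide_eq_right mult_1_right mult_minus_left)
  ultimately show "(\<lambda>n. c_coef (n+1) * \<tau> ^ (2*(n+1))) sums (- 3/2 * \<tau>^2 / (1 + 9 * \<tau>^2))"
    by (simp only:)
qed


end
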